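(* Let $q=p^m$ with $p$ an odd prime, $q\equiv 1\pmod 3$ and $q\geq 13$. Let $\pi,\sigma\in P$. Then $hd(\pi^{\triangle},\sigma^{\triangle})=hd(\pi,\sigma)-3$ if and only if $\pi\sigma$ is an edge of $C_P(q)$.
   Context: $PGL(2,q)$ is the group of maps $x\mapsto\frac{ax+b}{cx+d}$ ($a,b,c,d\in GF(q)$, $ad\neq bc$) acting on $GF(q)\cup\{\infty\}$ with the usual conventions ($-d/c\mapsto\infty$, $\infty\mapsto a/c$ if $c\neq0$, $\infty\mapsto\infty$ if $c=0$). For $K,i\in GF(q)$ and $r\in GF(q)\setminus\{0\}$, $f_{K,r,i}$ is the element of $PGL(2,q)$ with $f_{K,r,i}(x)=K+\frac{r}{x-i}$ for $x\notin\{i,\infty\}$, $f_{K,r,i}(\infty)=K$, $f_{K,r,i}(i)=\infty$; $P$ is the set of all such $f_{K,r,i}$. $hd(\pi,\sigma)$ is the number of points at which $\pi,\sigma$ differ. With distinguished element $F=\infty$, $\pi^{\triangle}$ is the permutation with $\pi^{\triangle}(\pi^{-1}(\infty))=\pi(\infty)$, $\pi^{\triangle}(\infty)=\infty$, $\pi^{\triangle}(x)=\pi(x)$ otherwise. The contraction graph $C_P(q)$ has vertex set $PGL(2,q)$, with distinct $\pi,\sigma$ adjacent iff $hd(\pi^{\triangle},\sigma^{\triangle})=q-4$. *)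

theory Defs
  imports "HOL-Library.Cardinality" "HOL-Computational_Algebra.Primes"
begin

text \<open>The projective line GF(q) \<union> {\<infinity>} is modelled as 'a option, with None = \<infinity>.
  The finite field GF(q) is an arbitrary finite field type 'a with CARD('a) = q.\<close>

definition mobius :: "'a::field \<Rightarrow> 'a \<Rightarrow> 'a \<Rightarrow> 'a \<Rightarrow> 'a option \<Rightarrow> 'a option" where
  "mobius a b c d x = (case x of
      None \<Rightarrow> (if c = 0 then None else Some (a / c))
    | Some y \<Rightarrow> (if c * y + d = 0 then None else Some ((a * y + b) / (c * y + d))))"

definition PGL2 :: "('a::field option \<Rightarrow> 'a option) set" where
  "PGL2 = {mobius a b c d | a b c d. a * d \<noteq> b * c}"

definition fKri :: "'a::field \<Rightarrow> 'a \<Rightarrow> 'a \<Rightarrow> 'a option \<Rightarrow> 'a option" where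
  "fKri K r i x = (case x of
      None \<Rightarrow> Some K
    | Some y \<Rightarrow> (if y = i then None else Some (K + r / (y - i))))"

definition Pset :: "('a::field option \<Rightarrow> 'a option) set" where
  "Pset = {fKri K r i | K r i. r \<noteq> 0}"

definition hd :: "('a option \<Rightarrow> 'a option) \<Rightarrow> ('a option \<Rightarrow> 'a option) \<Rightarrow> nat" where
  "hd \<pi> \<sigma> = card {x. \<pi> x \<noteq> \<sigma> x}"

text \<open>Contraction with distinguished element F = \<infinity> (None): the preimage of \<infinity> is sent to
  \<pi>(\<infinity>), \<infinity> is fixed, all other points as in \<pi>.\<close>
definition tri :: "('a option \<Rightarrow> 'a option) \<Rightarrow> 'a option \<Rightarrow> 'a option" where
  "tri \<pi> x = (if x = None then None else if \<pi> x = None then \<pi> None else \<pi> x)"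

definition CP_edge :: "('a::{field,finite} option \<Rightarrow> 'a option) \<Rightarrow> ('a option \<Rightarrow> 'a option) \<Rightarrow> bool" where
  "CP_edge \<pi> \<sigma> \<longleftrightarrow> \<pi> \<in> PGL2 \<and> \<sigma> \<in> PGL2 \<and> \<pi> \<noteq> \<sigma> \<and>
     int (hd (tri \<pi>) (tri \<sigma>)) = int (card (UNIV :: 'a set)) - 4"

end

theory Submission imports Defs "HOL-Computational_Algebra.Polynomial" begin

lemma fermat_fin:
  fixes a :: "'a::{field,finite}" assumes "a \<noteq> 0"
  shows "a ^ (CARD('a) - 1) = 1"
proof -
  define U where "U = (UNIV::'a set) - {0}"
  have cU: "card U = CARD('a) - 1" unfolding U_def by (simp add: card_Diff_singleton)
  have img: "(\<lambda>x. a * x) ` U = U"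
  proof
    show "(\<lambda>x. a * x) ` U \<subseteq> U" using assms by (auto simp: U_def)
    show "U \<subseteq> (\<lambda>x. a * x) ` U"
    proof
      fix y assume "y \<in> U"
      then have "y = a * (y / a)" "y / a \<in> U" using assms by (auto simp: U_def)
      then show "y \<in> (\<lambda>x. a * x) ` U" by blast
    qed
  qed
  have inj: "inj_on (\<lambda>x. a * x) U" using assms by (auto simp: inj_on_def)
  have "prod id U = prod id ((\<lambda>x. a * x) ` U)" using img by simp
  also have "\<dots> = prod (\<lambda>x. a * x) U" using prod.reindex[OF inj, of id] by simp
  also have "\<dots> = a ^ card U * prod id U" by (simp add: prod.distrib)
  finally have "prod id U = a ^ card U * prod id U" .
  moreover have "prod id U \<noteq> 0" by (simp add: U_def)
  ultimately show ?thesis using cU by (metis mult_cancel_right1)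
qed

lemma cube_root:
  assumes "CARD('a::{field,finite}) mod 3 = 1"
  shows "\<exists>w::'a. w ^ 3 = 1 \<and> w \<noteq> 1"
proof -
  define n where "n = CARD('a) div 3"
  have "CARD('a) div 3 * 3 + CARD('a) mod 3 = CARD('a)" by (rule div_mult_mod_eq)
  then have q: "CARD('a) - 1 = 3 * n" using assms unfolding n_def by linarith
  have n1: "n \<ge> 1"
  proof (rule ccontr)
    assume "\<not> n \<ge> 1" then have "CARD('a) = 1" using q assms by simp
    moreover have "card {0::'a, 1} \<le> CARD('a)" by (rule card_mono) auto
    ultimately show False by simp
  qed
  define P :: "'a poly" where "P = monom 1 n - 1"
  have dP: "degree P = n" unfolding P_def using n1
    
  proof -
    have "monom (1::'a) n - 1 = monom 1 n + (- 1)" by simp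
    moreover have "degree (- 1 :: 'a poly) < degree (monom (1::'a) n)"
      using n1 by (simp add: degree_monom_eq)
    ultimately show "degree (monom (1::'a) n - 1) = n"
      using degree_add_eq_left by (metis degree_monom_eq one_neq_zero)
  qed
  have "P \<noteq> 0" using dP n1 by auto
  then have cr: "card {x. poly P x = 0} \<le> n" using card_poly_roots_bound dP by metis
  have "{x. poly P x = 0} = {x. x ^ n = 1}" by (auto simp: P_def poly_monom)
  with cr have c1: "card {x::'a. x ^ n = 1} \<le> n" by simp
  have "\<exists>y::'a. y \<noteq> 0 \<and> y ^ n \<noteq> 1"
  proof (rule ccontr)
    assume "\<not> ?thesis"
    then have "UNIV - {0::'a} \<subseteq> {x. x ^ n = 1}" by auto
    then have "card (UNIV - {0::'a}) \<le> n" using c1 card_mono[of "{x::'a. x ^ n = 1}"] by (meson finite order_trans)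
    then show False using q n1 by (simp add: card_Diff_singleton)
  qed
  then obtain y :: 'a where y: "y \<noteq> 0" "y ^ n \<noteq> 1" by blast
  have "(y ^ n) ^ 3 = 1" using fermat_fin[OF y(1)] q by (simp add: power_mult[symmetric] mult.commute)
  then show ?thesis using y by blast
qed

lemma two_elems:
  assumes "finite S" "2 \<le> card S" shows "\<exists>x\<in>S. \<exists>y\<in>S. x \<noteq> y"
  using card_le_Suc0_iff_eq[OF assms(1)] assms(2) by auto

lemma three_elems:
  assumes "finite S" "3 \<le> card S" shows "\<exists>x\<in>S. \<exists>y\<in>S. \<exists>z\<in>S. x \<noteq> y \<and> x \<noteq> z \<and> y \<noteq> z"
proof -
  obtain x where x: "x \<in> S" using assms by fastforce
  have "2 \<le> card (S - {x})" using assms x by (simp add: card_Diff_singleton)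
  then obtain y z where "y \<in> S - {x}" "z \<in> S - {x}" "y \<noteq> z"
    using two_elems[of "S - {x}"] assms(1) by auto
  then show ?thesis using x by blast
qed

lemma quad3:
  fixes a b c x y z :: "'a::field"
  assumes "a*x^2+b*x+c = 0" "a*y^2+b*y+c = 0" "a*z^2+b*z+c = 0" "x \<noteq> y" "x \<noteq> z" "y \<noteq> z"
  shows "a = 0 \<and> b = 0 \<and> c = 0"
proof -
  have "(x - y) * (a*(x+y)+b) = (a*x^2+b*x+c) - (a*y^2+b*y+c)" by (simp add: algebra_simps power2_eq_square)
  then have "(x - y) * (a*(x+y)+b) = 0" using assms(1,2) by simp
  then have 1: "a*(x+y)+b = 0" using assms(4) by simp
  have "(x - z) * (a*(x+z)+b) = (a*x^2+b*x+c) - (a*z^2+b*z+c)" by (simp add: algebra_simps power2_eq_square)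
  then have "(x - z) * (a*(x+z)+b) = 0" using assms(1,3) by simp
  then have 2: "a*(x+z)+b = 0" using assms(5) by simp
  have "a * (y - z) = (a*(x+y)+b) - (a*(x+z)+b)" by (simp add: algebra_simps)
  then have "a * (y - z) = 0" using 1 2 by simp
  then have a: "a = 0" using assms(6) by simp
  then have "b = 0" using 1 by simp
  then show ?thesis using a assms(1) by simp
qed

lemma lin2:
  fixes b c x y :: "'a::field"
  assumes "b*x+c = 0" "b*y+c = 0" "x \<noteq> y"
  shows "b = 0 \<and> c = 0"
proof -
  have "b * (x - y) = (b*x+c) - (b*y+c)" by (simp add: algebra_simps)
  then have "b * (x - y) = 0" using assms by simp
  then have "b = 0" using assms(3) by simp
  then show ?thesis using assms by simp
qed

definition QQ :: "'a::field \<Rightarrow> 'a \<Rightarrow> 'a \<Rightarrow> 'a \<Rightarrow> 'a \<Rightarrow> 'a \<Rightarrow> 'a \<Rightarrow> 'a" where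
  "QQ K r i L s j y = (K-L)*(y-i)*(y-j) + r*(y-j) - s*(y-i)"

lemma QQ_expand: "QQ K r i L s j y = (K-L)*y^2 + ((r-s) - (K-L)*(i+j))*y + ((K-L)*i*j - r*j + s*i)"
  unfolding QQ_def by (simp add: algebra_simps power2_eq_square)

lemma agree_Some:
  fixes K r i L s j y :: "'a::field"
  assumes "r \<noteq> 0" "s \<noteq> 0"
  shows "fKri K r i (Some y) = fKri L s j (Some y) \<longleftrightarrow> QQ K r i L s j y = 0"
proof (cases "y = i")
  case True
  then show ?thesis
  proof (cases "y = j")
    case True then show ?thesis using \<open>y = i\<close> by (simp add: fKri_def QQ_def)
  next
    case False then show ?thesis using \<open>y = i\<close> assms by (simp add: fKri_def QQ_def)
  qed
next
  case False
  then show ?thesis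
  proof (cases "y = j")
    case True then show ?thesis using \<open>y \<noteq> i\<close> assms by (simp add: fKri_def QQ_def)
  next
    case False
    have a: "y - i \<noteq> 0" "y - j \<noteq> 0" using False \<open>y \<noteq> i\<close> by auto
    have "fKri K r i (Some y) = fKri L s j (Some y) \<longleftrightarrow> K + r/(y-i) = L + s/(y-j)"
      using False \<open>y \<noteq> i\<close> by (simp add: fKri_def)
    also have "\<dots> \<longleftrightarrow> (K + r/(y-i) - (L + s/(y-j))) * ((y-i)*(y-j)) = 0"
      using a by simp
    also have "(K + r/(y-i) - (L + s/(y-j))) * ((y-i)*(y-j)) = QQ K r i L s j y"
    proof -
      have g: "\<And>A B C D X::'a. (A + B - (C + D)) * X = A*X + B*X - C*X - D*X" by (simp add: algebra_simps)
      have e1: "r/(y-i)*((y-i)*(y-j)) = r*(y-j)" using a by simp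
      have e2: "s/(y-j)*((y-i)*(y-j)) = s*(y-i)" using a by simp
      show ?thesis unfolding g e1 e2 QQ_def by (simp add: algebra_simps)
    qed
    finally show ?thesis .
  qed
qed


lemma bound_Z:
  fixes K r i L s j :: "'a::{field,finite}"
  assumes "r \<noteq> 0" "s \<noteq> 0" "\<not> (K = L \<and> r = s \<and> i = j)"
  shows "card {y. QQ K r i L s j y = 0} + (if K = L then 1 else 0) \<le> 2"
proof (cases "K = L")
  case False
  have "card {y. QQ K r i L s j y = 0} \<le> 2"
  proof (rule ccontr)
    assume "\<not> ?thesis"
    then obtain x y z where "QQ K r i L s j x = 0" "QQ K r i L s j y = 0" "QQ K r i L s j z = 0"
       "x \<noteq> y" "x \<noteq> z" "y \<noteq> z"
      using three_elems[of "{y. QQ K r i L s j y = 0}"] by auto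
    then have "K - L = 0" using quad3 unfolding QQ_expand by blast
    then show False using False by simp
  qed
  then show ?thesis using False by simp
next
  case True
  have "card {y. QQ K r i L s j y = 0} \<le> 1"
  proof (rule ccontr)
    assume "\<not> ?thesis"
    then obtain x y where "QQ K r i L s j x = 0" "QQ K r i L s j y = 0" "x \<noteq> y"
      using two_elems[of "{y. QQ K r i L s j y = 0}"] by auto
    then have "(r - s)*x + (s*i - r*j) = 0" "(r - s)*y + (s*i - r*j) = 0"
      using True unfolding QQ_expand by (simp_all add: algebra_simps)
    then have "r - s = 0 \<and> s*i - r*j = 0" using lin2 \<open>x \<noteq> y\<close> by blast
    then have "r = s" "r * (i - j) = 0" by (auto simp: algebra_simps)
    then show False using assms True by simp
  qed
  then show ?thesis using True by simp
qed

lemma hd_eq: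
  fixes K r i L s j :: "'a::{field,finite}"
  assumes "r \<noteq> 0" "s \<noteq> 0"
  shows "hd (fKri K r i) (fKri L s j) = (if K = L then 0 else 1) + card {y. QQ K r i L s j y \<noteq> 0}"
proof -
  have "{x. fKri K r i x \<noteq> fKri L s j x} = (if K = L then {} else {None}) \<union> Some ` {y. QQ K r i L s j y \<noteq> 0}"
    (is "?A = ?B")
  proof
    show "?A \<subseteq> ?B"
    proof
      fix x assume "x \<in> ?A"
      then show "x \<in> ?B" using agree_Some[OF assms] by (cases x) (auto simp: fKri_def)
    qed
    show "?B \<subseteq> ?A" using agree_Some[OF assms] by (auto simp: fKri_def split: if_splits)
  qed
  moreover have "card ((if K = L then {} else {None}) \<union> Some ` {y. QQ K r i L s j y \<noteq> 0})
     = (if K = L then 0 else 1) + card {y. QQ K r i L s j y \<noteq> 0}"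
    by (subst card_Un_disjoint) (auto simp: card_image)
  ultimately show ?thesis unfolding hd_def by simp
qed

definition gg :: "'a::field \<Rightarrow> 'a \<Rightarrow> 'a \<Rightarrow> 'a \<Rightarrow> 'a" where
  "gg K r i y = (if y = i then K else K + r / (y - i))"

lemma hd_tri:
  fixes K r i L s j :: "'a::{field,finite}"
  shows "hd (tri (fKri K r i)) (tri (fKri L s j)) = card {y. gg K r i y \<noteq> gg L s j y}"
proof -
  have t: "\<And>K r i. tri (fKri K r i) = (\<lambda>x. case x of None \<Rightarrow> None | Some y \<Rightarrow> Some (gg K r i y))"
    by (rule ext, simp add: tri_def fKri_def gg_def split: option.splits)
  have "{x. tri (fKri K r i) x \<noteq> tri (fKri L s j) x} = Some ` {y. gg K r i y \<noteq> gg L s j y}"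
    unfolding t by (auto split: option.splits)
  then show ?thesis unfolding hd_def by (simp add: card_image)
qed

lemma gg_out:
  fixes K r i L s j y :: "'a::{field}"
  assumes "r \<noteq> 0" "s \<noteq> 0" "y \<noteq> i" "y \<noteq> j"
  shows "gg K r i y \<noteq> gg L s j y \<longleftrightarrow> QQ K r i L s j y \<noteq> 0"
  using agree_Some[OF assms(1,2), of K i y L j] assms by (simp add: gg_def fKri_def)

lemma card_split:
  assumes "finite A" shows "card A = card (A - B) + card (A \<inter> B)"
proof -
  have "A = (A - B) \<union> (A \<inter> B)" by blast
  then have "card A = card ((A - B) \<union> (A \<inter> B))" by simp
  also have "\<dots> = card (A - B) + card (A \<inter> B)" using assms by (intro card_Un_disjoint) auto
  finally show ?thesis .
qed


lemma tri_same:
  fixes K r L s i :: "'a::{field,finite}"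
  assumes "r \<noteq> 0" "s \<noteq> 0"
  shows "card {y. gg K r i y \<noteq> gg L s i y} = card {y. QQ K r i L s i y \<noteq> 0} + (if K = L then 0 else 1)"
proof -
  let ?T = "{y. gg K r i y \<noteq> gg L s i y}" and ?D = "{y. QQ K r i L s i y \<noteq> 0}"
  have 1: "?T - {i} = ?D - {i}"
  proof (rule set_eqI)
    fix y show "y \<in> ?T - {i} \<longleftrightarrow> y \<in> ?D - {i}"
      by (cases "y = i") (simp_all add: gg_out[OF assms])
  qed
  have 2: "?T \<inter> {i} = (if K = L then {} else {i})" by (simp add: gg_def)
  have 3: "?D \<inter> {i} = {}" by (simp add: QQ_def)
  have "card ?T = card (?T - {i}) + card (?T \<inter> {i})" by (rule card_split) simp
  also have "\<dots> = card (?D - {i}) + card (if K = L then {} else {i})" by (simp only: 1 2)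
  finally have cT: "card ?T = card (?D - {i}) + (if K = L then 0 else 1)" by (simp split: if_splits)
  have "card ?D = card (?D - {i}) + card (?D \<inter> {i})" by (rule card_split) simp
  also have "\<dots> = card (?D - {i})" by (simp only: 3 card.empty add_0_right)
  finally have cD: "card ?D = card (?D - {i})" .
  show ?thesis unfolding cT cD ..
qed

lemma tri_diff:
  fixes K r L s i j :: "'a::{field,finite}"
  assumes "r \<noteq> 0" "s \<noteq> 0" "i \<noteq> j"
  shows "int (card {y. gg K r i y \<noteq> gg L s j y}) = int (card {y. QQ K r i L s j y \<noteq> 0}) - 2
     + (if gg K r i i \<noteq> gg L s j i then 1 else 0) + (if gg K r i j \<noteq> gg L s j j then 1 else 0)"
proof -
  let ?T = "{y. gg K r i y \<noteq> gg L s j y}" and ?D = "{y. QQ K r i L s j y \<noteq> 0}"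
  have 1: "?T - {i,j} = ?D - {i,j}"
  proof (rule set_eqI)
    fix y show "y \<in> ?T - {i,j} \<longleftrightarrow> y \<in> ?D - {i,j}"
      by (cases "y = i \<or> y = j") (auto simp add: gg_out[OF assms(1,2)])
  qed
  have 2: "card (?T \<inter> {i,j}) = (if gg K r i i \<noteq> gg L s j i then 1 else 0) + (if gg K r i j \<noteq> gg L s j j then 1 else 0)"
  proof -
    have "?T \<inter> {i,j} = (if gg K r i i \<noteq> gg L s j i then {i} else {}) \<union> (if gg K r i j \<noteq> gg L s j j then {j} else {})"
      by auto
    then show ?thesis using assms(3) by (simp add: card_Un_disjoint)
  qed
  have "QQ K r i L s j i \<noteq> 0" "QQ K r i L s j j \<noteq> 0" using assms by (simp_all add: QQ_def)
  then have 3: "?D \<inter> {i,j} = {i,j}" by blast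
  have "card ?T = card (?T - {i,j}) + card (?T \<inter> {i,j})" by (rule card_split) simp
  also have "\<dots> = card (?D - {i,j}) + card (?T \<inter> {i,j})" by (simp only: 1)
  finally have cT: "card ?T = card (?D - {i,j}) + card (?T \<inter> {i,j})" .
  have "card ?D = card (?D - {i,j}) + card (?D \<inter> {i,j})" by (rule card_split) simp
  also have "\<dots> = card (?D - {i,j}) + 2" using 3 assms(3) by (simp only:) simp
  finally have cD: "card ?D = card (?D - {i,j}) + 2" .
  show ?thesis unfolding cT cD 2 by (auto split: if_splits)
qed

lemma omega_Z:
  fixes K r L s i j w :: "'a::{field,finite}"
  assumes "r \<noteq> 0" "s \<noteq> 0" "i \<noteq> j" "K \<noteq> L"
    and e1: "gg K r i i = gg L s j i" and e2: "gg K r i j = gg L s j j"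
    and w: "w ^ 3 = 1" "w \<noteq> 1"
  shows "card {y. QQ K r i L s j y = 0} = 2"
proof -
  define d where "d = K - L"
  define t where "t = i - j"
  have t0: "t \<noteq> 0" "j - i \<noteq> 0" using assms(3) by (auto simp: t_def)
  have "K = L + s / (i - j)" using e1 assms(3) by (simp add: gg_def)
  then have sdt: "s = d * t" using t0 by (simp add: d_def t_def field_simps)
  have "K + r / (j - i) = L" using e2 assms(3) by (simp add: gg_def)
  then have "r = (L - K) * (j - i)" using t0 by (simp add: field_simps)
  then have rdt: "r = d * t" by (simp add: d_def t_def algebra_simps)
  have ww: "w^2 + w + 1 = 0"
  proof -
    have "(w - 1) * (w^2 + w + 1) = w^3 - 1" by (simp add: algebra_simps power2_eq_square power3_eq_cube)
    then have "(w - 1) * (w^2 + w + 1) = 0" using w by simp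
    then show ?thesis using w by simp
  qed
  have fac: "QQ K r i L s j y = d * ((y - (j - t*w)) * (y - (j + t*(1+w))))" for y
  proof -
    have "QQ K r i L s j y = d * ((y-j)^2 - t*(y-j) + t^2)"
      unfolding QQ_def rdt sdt d_def t_def by (simp add: algebra_simps power2_eq_square)
    also have "(y-j)^2 - t*(y-j) + t^2 = (y - (j - t*w)) * (y - (j + t*(1+w))) + t^2 * (w^2 + w + 1)"
      by (simp add: algebra_simps power2_eq_square)
    finally show ?thesis using ww by simp
  qed
  have d0: "d \<noteq> 0" using assms(4) by (simp add: d_def)
  have Z: "{y. QQ K r i L s j y = 0} = {j - t*w, j + t*(1+w)}"
    unfolding fac using d0 by auto
  have ne: "j - t*w \<noteq> j + t*(1+w)"
  proof
    assume "j - t*w = j + t*(1+w)"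
    then have "t * (1 + 2*w) = 0" by (simp add: algebra_simps)
    then have h: "1 + 2*w = 0" using t0 by simp
    have "w * (w - 1) = (w^2 + w + 1) - (1 + 2*w)" by (simp add: algebra_simps power2_eq_square)
    then have "w * (w - 1) = 0" using ww h by simp
    then have "w = 0" using w by simp
    then show False using w by simp
  qed
  show ?thesis unfolding Z using ne by simp
qed


lemma fKri_PGL2:
  fixes K r i :: "'a::field"
  assumes "r \<noteq> 0" shows "fKri K r i \<in> PGL2"
proof -
  have "fKri K r i = mobius K (r - K*i) 1 (-i)"
  proof (rule ext)
    fix x show "fKri K r i x = mobius K (r - K*i) 1 (-i) x"
    proof (cases x)
      case None then show ?thesis by (simp add: fKri_def mobius_def)
    next
      case (Some y)
      show ?thesis
      proof (cases "y = i")
        case True then show ?thesis using Some by (simp add: fKri_def mobius_def)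
      next
        case False
        then have "y - i \<noteq> 0" by simp
        then have "K + r / (y - i) = (K * y + (r - K * i)) / (1 * y + - i)"
          by (simp add: field_simps)
        then show ?thesis using Some False by (simp add: fKri_def mobius_def)
      qed
    qed
  qed
  moreover have "K * (-i) \<noteq> (r - K*i) * 1" using assms by simp
  ultimately show ?thesis unfolding PGL2_def by blast
qed

lemma card_compl_pred:
  fixes P :: "'a::finite \<Rightarrow> bool"
  shows "card {y. P y} + card {y. \<not> P y} = CARD('a)"
proof -
  have "UNIV = {y. P y} \<union> {y. \<not> P y}" by blast
  then have "CARD('a) = card ({y. P y} \<union> {y. \<not> P y})" by simp
  also have "\<dots> = card {y. P y} + card {y. \<not> P y}" by (intro card_Un_disjoint) auto
  finally show ?thesis by simp
qed

theorem lemma11: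
  fixes \<pi> \<sigma> :: "'a::{field,finite} option \<Rightarrow> 'a option"
    and p m :: nat
  assumes "prime p" and "odd p" and "CARD('a) = p ^ m"
    and "CARD('a) mod 3 = 1" and "CARD('a) \<ge> 13"
    and "\<pi> \<in> Pset" and "\<sigma> \<in> Pset"
  shows "int (hd (tri \<pi>) (tri \<sigma>)) = int (hd \<pi> \<sigma>) - 3 \<longleftrightarrow> CP_edge \<pi> \<sigma>"
proof (cases "\<pi> = \<sigma>")
  case True
  then show ?thesis by (simp add: CP_edge_def hd_def)
next
  case False
  obtain K r i where pi: "\<pi> = fKri K r i" "r \<noteq> 0" using assms(6) unfolding Pset_def by blast
  obtain L s j where si: "\<sigma> = fKri L s j" "s \<noteq> 0" using assms(7) unfolding Pset_def by blast
  have edge: "CP_edge \<pi> \<sigma> \<longleftrightarrow> int (hd (tri \<pi>) (tri \<sigma>)) = int CARD('a) - 4"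
    using False fKri_PGL2 pi si unfolding CP_edge_def by auto
  define Z where "Z = {y. QQ K r i L s j y = 0}"
  define D where "D = {y. QQ K r i L s j y \<noteq> 0}"
  have ZD: "card Z + card D = CARD('a)" unfolding Z_def D_def by (rule card_compl_pred)
  have nid: "\<not> (K = L \<and> r = s \<and> i = j)" using False pi si by auto
  have bnd: "card Z + (if K = L then 1 else 0) \<le> 2" unfolding Z_def by (rule bound_Z[OF pi(2) si(2) nid])
  have hdv: "hd \<pi> \<sigma> = (if K = L then 0 else 1) + card D"
    unfolding pi(1) si(1) D_def by (rule hd_eq[OF pi(2) si(2)])
  have ht0: "hd (tri \<pi>) (tri \<sigma>) = card {y. gg K r i y \<noteq> gg L s j y}"
    unfolding pi(1) si(1) by (rule hd_tri)
  show ?thesis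
  proof (cases "i = j")
    case True
    have ht: "hd (tri \<pi>) (tri \<sigma>) = card D + (if K = L then 0 else 1)"
      unfolding ht0 D_def True by (rule tri_same[OF pi(2) si(2)])
    show ?thesis unfolding edge ht hdv using ZD bnd by (auto split: if_splits)
  next
    case ij: False
    define a :: int where "a = (if gg K r i i \<noteq> gg L s j i then 1 else 0)"
    define b :: int where "b = (if gg K r i j \<noteq> gg L s j j then 1 else 0)"
    define c :: int where "c = (if K = L then 0 else 1)"
    have ht: "int (hd (tri \<pi>) (tri \<sigma>)) = int (card D) - 2 + a + b"
      unfolding ht0 D_def a_def b_def by (rule tri_diff[OF pi(2) si(2) ij])
    have hv: "int (hd \<pi> \<sigma>) = c + int (card D)" unfolding hdv c_def by simp
    have ZD': "int (card Z) + int (card D) = int CARD('a)" using ZD by linarith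
    have bnd': "int (card Z) + 1 - c \<le> 2" using bnd unfolding c_def by (auto split: if_splits)
    have abc: "a \<in> {0,1}" "b \<in> {0,1}" "c \<in> {0,1}" unfolding a_def b_def c_def by auto
    have om: "card Z = 2" if "a = 0" "b = 0" "c = 1"
    proof -
      obtain w :: 'a where w: "w ^ 3 = 1" "w \<noteq> 1" using cube_root[OF assms(4)] by blast
      have "K \<noteq> L" "gg K r i i = gg L s j i" "gg K r i j = gg L s j j"
        using that unfolding a_def b_def c_def by (auto split: if_splits)
      then show ?thesis unfolding Z_def using omega_Z[OF pi(2) si(2) ij _ _ _ w] by blast
    qed
    show ?thesis
    proof
      assume "int (hd (tri \<pi>) (tri \<sigma>)) = int (hd \<pi> \<sigma>) - 3"
      then have "a + b + 1 = c" using ht hv by linarith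
      then have "a = 0" "b = 0" "c = 1" using abc by auto
      then have "card Z = 2" using om by blast
      then show "CP_edge \<pi> \<sigma>" unfolding edge using ht ZD' \<open>a = 0\<close> \<open>b = 0\<close> by linarith
    next
      assume "CP_edge \<pi> \<sigma>"
      then have "int (card Z) = 2 + a + b" using edge ht ZD' by linarith
      then have "a = 0" "b = 0" "c = 1" using abc bnd' by auto
      then show "int (hd (tri \<pi>) (tri \<sigma>)) = int (hd \<pi> \<sigma>) - 3" using ht hv by linarith
    qed
  qed
qed

end
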